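(* Let $\mathbf{a},\mathbf{b},\mathbf{c},\mathbf{d}\in\mathcal{R}^n$ and $\mathbf{e},\mathbf{f},\mathbf{g},\mathbf{h}\in\mathcal{R}^m$. Define the $m\times n$ matrices \begin{align*} Q&=\mathbf{f}^{*t}\mathbf{a}+\mathbf{g}^t\mathbf{c}-\mathbf{e}^t\mathbf{b}^*+\mathbf{h}^t\mathbf{d},\\ R&=\mathbf{f}^{*t}\mathbf{b}+\mathbf{g}^{*t}\mathbf{d}+\mathbf{e}^t\mathbf{a}^*-\mathbf{h}^{*t}\mathbf{c},\\ S&=\mathbf{g}^{*t}\mathbf{a}-\mathbf{f}^t\mathbf{c}-\mathbf{h}^t\mathbf{b}-\mathbf{e}^t\mathbf{d}^*,\\ T&=\mathbf{g}^{t}\mathbf{b}-\mathbf{f}^t\mathbf{d}+\mathbf{h}^{*t}\mathbf{a}+\mathbf{e}^t\mathbf{c}^*. \end{align*} Then in $\mathcal{R}[x^{\pm1},y^{\pm1}]$, \[ (\psi_Q\psi_Q^*+\psi_R\psi_R^*+\psi_S\psi_S^*+\psi_T\psi_T^* )(x,y)=(\psi_{\mathbf{a}}\psi^*_{\mathbf{a}}+\psi_{\mathbf{b}}\psi^*_{\mathbf{b}}+\psi_{\mathbf{c}}\psi^*_{\mathbf{c}}+\psi_{\mathbf{d}}\psi^*_{\mathbf{d}})(x)\,(\psi_{\mathbf{e}}\psi^*_{\mathbf{e}}+\psi_{\mathbf{f}}\psi^*_{\mathbf{f}}+\psi_{\mathbf{g}}\psi^*_{\mathbf{g}}+\psi_{\mathbf{h}}\psi^*_{\mathbf{h}})(y).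 \]
   Context: $\mathcal{R}$ is a commutative ring with identity equipped with an involutive ring automorphism $*$. It is extended to $\mathcal{R}[x^{\pm1}]$ by acting on coefficients and $x\mapsto x^{-1}$, and to $\mathcal{R}[x^{\pm1},y^{\pm1}]$ by acting on coefficients, $x\mapsto x^{-1}$, $y\mapsto y^{-1}$; $f^*$ denotes the image of $f$. For $\mathbf{a}=(a_0,\dots,a_{l-1})\in\mathcal{R}^l$: $\mathbf{a}^*=(a_{l-1}^*,\dots,a_0^* )$, $\phi_{\mathbf{a}}(x)=\sum_{i=0}^{l-1}a_ix^i$, and $\psi_{\mathbf{a}}(x)=x^{1-l}\phi_{\mathbf{a}}(x^2)$. Vectors in $\mathcal{R}^k$ are $1\times k$ matrices, $t$ is transpose, so $\mathbf{u}^t\mathbf{v}$ is the $m\times n$ outer product. For $A\in\mathcal{R}^{m\times n}$ with rows $\mathbf{a}_0,\dots,\mathbf{a}_{m-1}$, $\psi_A(x,y)=\sum_{i=0}^{m-1}\psi_{\mathbf{a}_i}(x)\,y^{2i+1-m}$. *)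

theory Defs
  imports Main "HOL-Library.Poly_Mapping" "HOL-Library.Product_Plus"
begin

text \<open>Laurent polynomials in two variables x, y over a ring 'a, as finitely supported
  coefficient maps on exponent pairs (i,j) :: int \<times> int; multiplication is convolution.
  Laurent polynomials in x alone are those supported on exponents (i,0).\<close>
type_synonym 'a lpoly2 = "(int \<times> int) \<Rightarrow>\<^sub>0 'a"

definition inv_ring_aut :: "('a::comm_ring_1 \<Rightarrow> 'a) \<Rightarrow> bool" where
  "inv_ring_aut s \<longleftrightarrow> (\<forall>u v. s (u + v) = s u + s v) \<and> (\<forall>u v. s (u * v) = s u * s v)
     \<and> s 1 = 1 \<and> (\<forall>u. s (s u) = u)"

text \<open>Extension of the involution: act on coefficients and x \<mapsto> x^-1, y \<mapsto> y^-1.\<close>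
definition lstar :: "('a::comm_ring_1 \<Rightarrow> 'a) \<Rightarrow> 'a lpoly2 \<Rightarrow> 'a lpoly2" where
  "lstar s f = (\<Sum>k\<in>Poly_Mapping.keys f. Poly_Mapping.single (- k) (s (Poly_Mapping.lookup f k)))"

definition vstar :: "('a \<Rightarrow> 'a) \<Rightarrow> nat \<Rightarrow> (nat \<Rightarrow> 'a) \<Rightarrow> (nat \<Rightarrow> 'a)" where
  "vstar s l a = (\<lambda>i. s (a (l - 1 - i)))"

text \<open>psi_a(x) = x^(1-l) phi_a(x^2) = sum_{i<l} a_i x^(2i+1-l), as an element in the x-variable.\<close>
definition psi_x :: "nat \<Rightarrow> (nat \<Rightarrow> 'a::comm_ring_1) \<Rightarrow> 'a lpoly2" where
  "psi_x l a = (\<Sum>i<l. Poly_Mapping.single (2 * int i + 1 - int l, 0) (a i))"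

definition psi_y :: "nat \<Rightarrow> (nat \<Rightarrow> 'a::comm_ring_1) \<Rightarrow> 'a lpoly2" where
  "psi_y l a = (\<Sum>i<l. Poly_Mapping.single (0, 2 * int i + 1 - int l) (a i))"

definition psi_mat :: "nat \<Rightarrow> nat \<Rightarrow> (nat \<Rightarrow> nat \<Rightarrow> 'a::comm_ring_1) \<Rightarrow> 'a lpoly2" where
  "psi_mat m n A = (\<Sum>i<m. psi_x n (A i) * Poly_Mapping.single (0, 2 * int i + 1 - int m) 1)"

definition outer :: "(nat \<Rightarrow> 'a::times) \<Rightarrow> (nat \<Rightarrow> 'a) \<Rightarrow> nat \<Rightarrow> nat \<Rightarrow> 'a" where
  "outer u v = (\<lambda>i j. u i * v j)"

end

theory Submission
  imports Defs
begin


lemma s0: assumes "inv_ring_aut s" shows "s 0 = 0"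
proof -
  have "s (0+0) = s 0 + s 0" using assms unfolding inv_ring_aut_def by blast
  thus ?thesis by simp
qed

lemma s_add: "inv_ring_aut s \<Longrightarrow> s (u + v) = s u + s v" unfolding inv_ring_aut_def by blast
lemma s_mult: "inv_ring_aut s \<Longrightarrow> s (u * v) = s u * s v" unfolding inv_ring_aut_def by blast
lemma s_s: "inv_ring_aut s \<Longrightarrow> s (s u) = u" unfolding inv_ring_aut_def by blast

lemma s_uminus: assumes "inv_ring_aut s" shows "s (- u) = - s u"
proof -
  have "s (-u + u) = s (-u) + s u" by (rule s_add[OF assms])
  thus ?thesis using s0[OF assms] by (simp add: eq_neg_iff_add_eq_0)
qed

lemma s_diff: assumes "inv_ring_aut s" shows "s (u - v) = s u - s v"
  using s_add[OF assms, of u "-v"] s_uminus[OF assms, of v] by simp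

lemma lookup_lstar: assumes "inv_ring_aut s"
  shows "Poly_Mapping.lookup (lstar s f) k = s (Poly_Mapping.lookup f (- k))"
proof -
  have "Poly_Mapping.lookup (lstar s f) k
      = (\<Sum>k'\<in>Poly_Mapping.keys f. if k = - k' then s (Poly_Mapping.lookup f k') else 0)"
    unfolding lstar_def lookup_sum by (intro sum.cong) (auto simp: lookup_single when_def)
  also have "\<dots> = (\<Sum>k'\<in>Poly_Mapping.keys f. if k' = - k then s (Poly_Mapping.lookup f k') else 0)"
    by (intro sum.cong) auto
  also have "\<dots> = s (Poly_Mapping.lookup f (- k))"
    by (simp add: sum.delta s0[OF assms] in_keys_iff)
  finally show ?thesis .
qed

lemma lstar_add: "inv_ring_aut s \<Longrightarrow> lstar s (p + q) = lstar s p + lstar s q"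
  by (rule poly_mapping_eqI) (simp add: lookup_lstar lookup_add s_add)
lemma lstar_diff: "inv_ring_aut s \<Longrightarrow> lstar s (p - q) = lstar s p - lstar s q"
  by (rule poly_mapping_eqI) (simp add: lookup_lstar lookup_minus s_diff)
lemma lstar_lstar: "inv_ring_aut s \<Longrightarrow> lstar s (lstar s p) = p"
  by (rule poly_mapping_eqI) (simp add: lookup_lstar s_s)
lemma lstar_zero: "inv_ring_aut s \<Longrightarrow> lstar s 0 = 0"
  by (rule poly_mapping_eqI) (simp add: lookup_lstar s0)
lemma lstar_sum: "inv_ring_aut s \<Longrightarrow> lstar s (sum F A) = (\<Sum>x\<in>A. lstar s (F x))"
  by (induction A rule: infinite_finite_induct) (auto simp: lstar_zero lstar_add)
lemma lstar_single: assumes "inv_ring_aut s" shows "lstar s (Poly_Mapping.single k v) = Poly_Mapping.single (- k) (s v)"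
proof (rule poly_mapping_eqI)
  fix x
  have e: "(k = - x) = (- k = x)" by auto
  show "Poly_Mapping.lookup (lstar s (Poly_Mapping.single k v)) x = Poly_Mapping.lookup (Poly_Mapping.single (- k) (s v)) x"
    unfolding lookup_lstar[OF assms] lookup_single when_def e by (simp add: s0[OF assms])
qed

lemma pm_expand: "(f :: 'b::comm_monoid_add \<Rightarrow>\<^sub>0 'c::comm_monoid_add) = (\<Sum>k\<in>Poly_Mapping.keys f. Poly_Mapping.single k (Poly_Mapping.lookup f k))"
proof (rule poly_mapping_eqI)
  fix k
  show "Poly_Mapping.lookup f k = Poly_Mapping.lookup (\<Sum>k\<in>Poly_Mapping.keys f. Poly_Mapping.single k (Poly_Mapping.lookup f k)) k"
    unfolding lookup_sum by (simp add: lookup_single when_def sum.delta' in_keys_iff)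
qed

lemma lstar_mult: assumes "inv_ring_aut s" shows "lstar s (p * q) = lstar s p * lstar s q"
proof -
  let ?K = "Poly_Mapping.keys p" and ?L = "Poly_Mapping.keys q"
  have "p * q = (\<Sum>k\<in>?K. Poly_Mapping.single k (Poly_Mapping.lookup p k)) * (\<Sum>l\<in>?L. Poly_Mapping.single l (Poly_Mapping.lookup q l))"
    by (metis pm_expand)
  also have "\<dots> = (\<Sum>k\<in>?K. \<Sum>l\<in>?L. Poly_Mapping.single k (Poly_Mapping.lookup p k) * Poly_Mapping.single l (Poly_Mapping.lookup q l))"
    by (rule sum_product)
  finally have pq: "p * q = \<dots>" .
  have "lstar s (p * q) = (\<Sum>k\<in>?K. \<Sum>l\<in>?L. lstar s (Poly_Mapping.single k (Poly_Mapping.lookup p k) * Poly_Mapping.single l (Poly_Mapping.lookup q l)))"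
    unfolding pq lstar_sum[OF assms] ..
  also have "\<dots> = (\<Sum>k\<in>?K. \<Sum>l\<in>?L. Poly_Mapping.single (-k) (s (Poly_Mapping.lookup p k)) * Poly_Mapping.single (-l) (s (Poly_Mapping.lookup q l)))"
    by (intro sum.cong refl) (simp add: mult_single lstar_single[OF assms] s_mult[OF assms])
  also have "\<dots> = (\<Sum>k\<in>?K. Poly_Mapping.single (-k) (s (Poly_Mapping.lookup p k))) * (\<Sum>l\<in>?L. Poly_Mapping.single (-l) (s (Poly_Mapping.lookup q l)))"
    by (rule sum_product[symmetric])
  also have "\<dots> = lstar s p * lstar s q" unfolding lstar_def ..
  finally show ?thesis .
qed

lemma ring_id:
  fixes A B C D E F G H Ac Bc Cc Dc Ec Fc Gc Hc :: "'b::comm_ring_1"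
  shows "(A * Fc + C * G - Bc * E + D * H) * (Ac * F + Cc * Gc - B * Ec + Dc * Hc)
   + (B * Fc + D * Gc + Ac * E - C * Hc) * (Bc * F + Dc * G + A * Ec - Cc * H)
   + (A * Gc - C * F - B * H - Dc * E) * (Ac * G - Cc * Fc - Bc * Hc - D * Ec)
   + (B * G - D * F + A * Hc + Cc * E) * (Bc * Gc - Dc * Fc + Ac * H + C * Ec)
   = (A * Ac + B * Bc + C * Cc + D * Dc) * (E * Ec + F * Fc + G * Gc + H * Hc)"
  by (simp add: ring_distribs)

lemma psi_x_add: "psi_x n (\<lambda>j. u j + v j) = psi_x n u + psi_x n v"
  unfolding psi_x_def by (simp add: single_add sum.distrib)
lemma psi_x_diff: "psi_x n (\<lambda>j. u j - v j) = psi_x n u - psi_x n v"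
  unfolding psi_x_def by (simp add: single_diff sum_subtractf)
lemma psi_mat_add: "psi_mat m n (\<lambda>i j. A i j + B i j) = psi_mat m n A + psi_mat m n B"
  unfolding psi_mat_def by (simp add: psi_x_add sum.distrib distrib_right)
lemma psi_mat_diff: "psi_mat m n (\<lambda>i j. A i j - B i j) = psi_mat m n A - psi_mat m n B"
  unfolding psi_mat_def by (simp add: psi_x_diff sum_subtractf left_diff_distrib)

lemma psi_x_scale: "psi_x n (\<lambda>j. c * v j) = Poly_Mapping.single 0 c * psi_x n v"
  unfolding psi_x_def by (simp add: sum_distrib_left mult_single)

lemma psi_mat_outer: "psi_mat m n (outer u v) = psi_x n v * psi_y m u"
proof -
  have "psi_mat m n (outer u v) = (\<Sum>i<m. psi_x n v * Poly_Mapping.single (0, 2 * int i + 1 - int m) (u i))"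
    unfolding psi_mat_def outer_def psi_x_scale
  proof (intro sum.cong refl)
    fix i
    let ?P = "psi_x n v" and ?X = "Poly_Mapping.single (0::int\<times>int) (u i)"
      and ?Y = "Poly_Mapping.single (0::int, 2 * int i + 1 - int m) (1::'a)"
    have "?X * ?P * ?Y = ?P * (?X * ?Y)" by (simp only: ac_simps)
    also have "?X * ?Y = Poly_Mapping.single (0, 2 * int i + 1 - int m) (u i)"
      by (simp add: mult_single)
    finally show "?X * ?P * ?Y = ?P * Poly_Mapping.single (0, 2 * int i + 1 - int m) (u i)" .
  qed
  also have "\<dots> = psi_x n v * psi_y m u" unfolding psi_y_def by (simp add: sum_distrib_left)
  finally show ?thesis .
qed

lemma psi_x_vstar: assumes "inv_ring_aut s" shows "psi_x n (vstar s n v) = lstar s (psi_x n v)"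
proof -
  have "lstar s (psi_x n v) = (\<Sum>i<n. Poly_Mapping.single (- (2 * int i + 1 - int n), 0) (s (v i)))"
    unfolding psi_x_def by (simp add: lstar_sum[OF assms] lstar_single[OF assms])
  also have "\<dots> = (\<Sum>i<n. Poly_Mapping.single (- (2 * int (n - Suc i) + 1 - int n), 0) (s (v (n - Suc i))))"
    by (rule sum.nat_diff_reindex[symmetric])
  also have "\<dots> = psi_x n (vstar s n v)"
    unfolding psi_x_def vstar_def by (intro sum.cong refl) (auto simp: of_nat_diff algebra_simps)
  finally show ?thesis by simp
qed

lemma psi_y_vstar: assumes "inv_ring_aut s" shows "psi_y n (vstar s n v) = lstar s (psi_y n v)"
proof -
  have "lstar s (psi_y n v) = (\<Sum>i<n. Poly_Mapping.single (0, - (2 * int i + 1 - int n)) (s (v i)))"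
    unfolding psi_y_def by (simp add: lstar_sum[OF assms] lstar_single[OF assms])
  also have "\<dots> = (\<Sum>i<n. Poly_Mapping.single (0, - (2 * int (n - Suc i) + 1 - int n)) (s (v (n - Suc i))))"
    by (rule sum.nat_diff_reindex[symmetric])
  also have "\<dots> = psi_y n (vstar s n v)"
    unfolding psi_y_def vstar_def by (intro sum.cong refl) (auto simp: of_nat_diff algebra_simps)
  finally show ?thesis by simp
qed

theorem lemma3p1:
  fixes s :: "'a::comm_ring_1 \<Rightarrow> 'a"
    and m n :: nat
    and a b c d e f g h :: "nat \<Rightarrow> 'a"
    and Q R S T :: "nat \<Rightarrow> nat \<Rightarrow> 'a"
  assumes "inv_ring_aut s"
    and "Q = (\<lambda>i j. outer (vstar s m f) a i j + outer g c i j - outer e (vstar s n b) i j + outer h d i j)"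
    and "R = (\<lambda>i j. outer (vstar s m f) b i j + outer (vstar s m g) d i j + outer e (vstar s n a) i j - outer (vstar s m h) c i j)"
    and "S = (\<lambda>i j. outer (vstar s m g) a i j - outer f c i j - outer h b i j - outer e (vstar s n d) i j)"
    and "T = (\<lambda>i j. outer g b i j - outer f d i j + outer (vstar s m h) a i j + outer e (vstar s n c) i j)"
  shows "psi_mat m n Q * lstar s (psi_mat m n Q) + psi_mat m n R * lstar s (psi_mat m n R)
         + psi_mat m n S * lstar s (psi_mat m n S) + psi_mat m n T * lstar s (psi_mat m n T)
       = (psi_x n a * lstar s (psi_x n a) + psi_x n b * lstar s (psi_x n b)
          + psi_x n c * lstar s (psi_x n c) + psi_x n d * lstar s (psi_x n d))
       * (psi_y m e * lstar s (psi_y m e) + psi_y m f * lstar s (psi_y m f)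
          + psi_y m g * lstar s (psi_y m g) + psi_y m h * lstar s (psi_y m h))"
proof -
  note A = assms(1)
  have "\<And>A B. A = B \<Longrightarrow> A = B" by simp
  show ?thesis
    unfolding assms(2-5) psi_mat_add psi_mat_diff psi_mat_outer psi_x_vstar[OF A] psi_y_vstar[OF A]
      lstar_add[OF A] lstar_diff[OF A] lstar_mult[OF A] lstar_lstar[OF A]
    by (rule ring_id)
qed

end
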